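(* Let $0\le\alpha\le1$ and let $f,g$ be infinitely differentiable functions (on a domain containing $[0,\infty)$ and the range of $g$ respectively) with $f(g(0))=0$, such that all series below converge absolutely and may be rearranged. For real $\beta$ define $$D_x^{\beta}[h](x)=\sum_{k=0}^{\infty}\frac{\sin[\pi(\beta-k)]}{\pi(\beta-k)}\,\frac{\Gamma(\beta+1)}{\Gamma(k+1)}\,x^{k-\beta}\,\frac{d^k}{dx^k}\big[h(x)-h(0)\big],\qquad x>0,$$ with $\frac{\sin[\pi(\beta-k)]}{\pi(\beta-k)}:=1$ when $\beta=k$. For each integer $m\ge0$ define the differential operator (normal-ordered hypergeometric function) $$:{}_2F_2:\left[\begin{matrix}1,\ m-\alpha\\ 1+m,\ 1+m-\alpha\end{matrix};-x\frac{d}{dx}\right]:=\sum_{k=0}^{\infty}\frac{(1)_k\,(m-\alpha)_k}{(1+m)_k\,(1+m-\alpha)_k\,k!}\,(-1)^k\,x^k\frac{d^k}{dx^k},$$ where $(a)_k$ is the Pochhammer symbol, and the weight $$W_m(\alpha,x,g(x))=\sum_{j=0}^{m}\frac{(-1)^j}{m!}\binom{m}{j}\,g(x)^j\;:{}_2F_2:\left[\begin{matrix}1,\ m-\alpha\\ 1+m,\ 1+m-\alpha\end{matrix};-x\frac{d}{dx}\right]\frac{d^m}{dx^m}\big(g(x)^{m-j}\big),$$ where the operator acts only on $\frac{d^m}{dx^m}(g(x)^{m-j})$. Then for $x>0$, $$D_x^{\alpha}[f(g(x))]=\sum_{m=0}^{\infty}W_m(\alpha,x,g(x))\,\frac{\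sin[\pi(\alpha-m)]}{\pi(\alpha-m)}\,\frac{\Gamma(\alpha+1)}{\Gamma(m+1)}\,x^{m-\alpha}\,f^{(m)}(g(x)).$$
   Context: For $0\le\alpha\le1$ the series operator $D_x^\alpha$ is the expansion the paper uses for the Caputo fractional derivative ${}^C D_x^\alpha f(x)=\frac{1}{\Gamma(1-\alpha)}\int_0^x (x-t)^{-\alpha} f'(t)\,dt$, $x>0$. The paper adopts the convention of replacing every function $h$ by $h(x)-h(0)$, i.e. functions being differentiated are taken to vanish at the origin. *)

theory Defs
  imports "HOL-Analysis.Analysis"
begin

definition smooth_on :: "real set \<Rightarrow> (real \<Rightarrow> real) \<Rightarrow> bool" where
  "smooth_on S h \<longleftrightarrow>
     (\<forall>k. \<forall>y\<in>S. ((deriv ^^ k) h has_real_derivative (deriv ^^ Suc k) h y) (at y))"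

definition sinc_ratio :: "real \<Rightarrow> nat \<Rightarrow> real" where
  "sinc_ratio \<beta> k = (if \<beta> = real k then 1
                      else sin (pi * (\<beta> - real k)) / (pi * (\<beta> - real k)))"

definition frac_coeff :: "real \<Rightarrow> nat \<Rightarrow> real" where
  "frac_coeff \<beta> k = sinc_ratio \<beta> k * Gamma (\<beta> + 1) / Gamma (real k + 1)"

definition frac_D_term :: "real \<Rightarrow> (real \<Rightarrow> real) \<Rightarrow> real \<Rightarrow> nat \<Rightarrow> real" where
  "frac_D_term \<beta> h x k =
     frac_coeff \<beta> k * x powr (real k - \<beta>) * (deriv ^^ k) (\<lambda>t. h t - h 0) x"

definition frac_D :: "real \<Rightarrow> (real \<Rightarrow> real) \<Rightarrow> real \<Rightarrow> real" where
  "frac_D \<beta> h x = (\<Sum>k. frac_D_term \<beta> h x k)"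

definition F22_coeff :: "real \<Rightarrow> nat \<Rightarrow> nat \<Rightarrow> real" where
  "F22_coeff \<alpha> m n =
     pochhammer 1 n * pochhammer (real m - \<alpha>) n /
       (pochhammer (1 + real m) n * pochhammer (1 + real m - \<alpha>) n * fact n) * (-1) ^ n"

definition F22_term :: "real \<Rightarrow> nat \<Rightarrow> (real \<Rightarrow> real) \<Rightarrow> real \<Rightarrow> nat \<Rightarrow> real" where
  "F22_term \<alpha> m u x n = F22_coeff \<alpha> m n * x ^ n * (deriv ^^ n) u x"

definition F22_op :: "real \<Rightarrow> nat \<Rightarrow> (real \<Rightarrow> real) \<Rightarrow> real \<Rightarrow> real" where
  "F22_op \<alpha> m u x = (\<Sum>n. F22_term \<alpha> m u x n)"

definition W_weight :: "real \<Rightarrow> nat \<Rightarrow> (real \<Rightarrow> real) \<Rightarrow> real \<Rightarrow> real" where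
  "W_weight \<alpha> m g x =
     (\<Sum>j=0..m. (-1) ^ j / fact m * real (m choose j) * g x ^ j *
        F22_op \<alpha> m ((deriv ^^ m) (\<lambda>t. g t ^ (m - j))) x)"

definition RHS_term :: "real \<Rightarrow> (real \<Rightarrow> real) \<Rightarrow> (real \<Rightarrow> real) \<Rightarrow> real \<Rightarrow> nat \<Rightarrow> real" where
  "RHS_term \<alpha> f g x m =
     W_weight \<alpha> m g x * frac_coeff \<alpha> m * x powr (real m - \<alpha>) * (deriv ^^ m) f (g x)"

text \<open>Term of the fully expanded triple series (indices m, j \<le> m, n), used to express
  that the series may be rearranged.\<close>
definition triple_term :: "real \<Rightarrow> (real \<Rightarrow> real) \<Rightarrow> (real \<Rightarrow> real) \<Rightarrow> real \<Rightarrow> nat \<Rightarrow> nat \<Rightarrow> nat \<Rightarrow> real" where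
  "triple_term \<alpha> f g x m j n =
     (-1) ^ j / fact m * real (m choose j) * g x ^ j *
       F22_term \<alpha> m ((deriv ^^ m) (\<lambda>t. g t ^ (m - j))) x n *
       frac_coeff \<alpha> m * x powr (real m - \<alpha>) * (deriv ^^ m) f (g x)"

end

theory Submission
  imports Defs
begin

lemma iter_deriv_eq:
  assumes U: "open U" and h0: "\<And>y. y \<in> U \<Longrightarrow> h y = H 0 y"
    and HD: "\<And>k y. y \<in> U \<Longrightarrow> (H k has_real_derivative H (Suc k) y) (at y)"
  shows "y \<in> U \<Longrightarrow> (deriv ^^ k) h y = H k y"
proof (induction k arbitrary: y)
  case 0 then show ?case using h0 by simp
next
  case (Suc k y)
  have "((deriv ^^ k) h has_real_derivative H (Suc k) y) (at y)"
    by (rule has_field_derivative_transform_within_open[OF HD[OF Suc.prems] U Suc.prems])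
       (simp add: Suc.IH)
  then show ?case by (simp add: DERIV_imp_deriv)
qed

lemma smooth_from_H:
  assumes U: "open U" and h0: "\<And>y. y \<in> U \<Longrightarrow> h y = H 0 y"
    and HD: "\<And>k y. y \<in> U \<Longrightarrow> (H k has_real_derivative H (Suc k) y) (at y)"
  shows "smooth_on U h"
  unfolding smooth_on_def
proof (intro allI ballI)
  fix k y assume y: "y \<in> U"
  have e: "\<And>k y. y \<in> U \<Longrightarrow> (deriv ^^ k) h y = H k y" using iter_deriv_eq[OF U h0 HD] by blast
  have "((deriv ^^ k) h has_real_derivative H (Suc k) y) (at y)"
    by (rule has_field_derivative_transform_within_open[OF HD[OF y] U y]) (simp add: e)
  then show "((deriv ^^ k) h has_real_derivative (deriv ^^ Suc k) h y) (at y)"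
    using e[OF y, of "Suc k"] by simp
qed

lemma smooth_deriv:
  "smooth_on U h \<Longrightarrow> y \<in> U \<Longrightarrow> ((deriv ^^ k) h has_real_derivative (deriv ^^ Suc k) h y) (at y)"
  unfolding smooth_on_def by blast

lemma Suc_choose': "Suc n choose k = (n choose k) + (if k = 0 then 0 else (n choose (k-1)))"
  by (cases k) simp_all

lemma smooth_mult:
  assumes U: "open U" and u: "smooth_on U u" and v: "smooth_on U v"
  shows "smooth_on U (\<lambda>t. u t * v t)"
proof (rule smooth_from_H[OF U, where H = "\<lambda>n w. (\<Sum>i = 0..n. real (n choose i) * (deriv ^^ i) u w * (deriv ^^ (n-i)) v w)"])
  fix y assume "y \<in> U" then show "u y * v y = (\<Sum>i = 0..0. real (0 choose i) * (deriv ^^ i) u y * (deriv ^^ (0-i)) v y)"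
    by simp
next
  fix n y assume y: "y \<in> U"
  have sumeq: "(\<Sum>i = 0..n.
               real (n choose i) * ((deriv ^^ Suc i) u y * (deriv ^^ (n-i)) v y + (deriv ^^ Suc (n-i)) v y * (deriv ^^ i) u y)) =
            v y * (deriv ^^ Suc n) u y + (\<Sum>i = 0..n. (deriv ^^ i) u y * (real (Suc n choose i) * (deriv ^^ (Suc n - i)) v y))"
    apply (simp add: Suc_choose' algebra_simps sum.distrib del: funpow.simps)
    apply (subst (4) sum_Suc_reindex)
    apply (auto simp: algebra_simps Suc_diff_le intro: sum.cong simp del: funpow.simps)
    done
  have "((\<lambda>w. \<Sum>i = 0..n. real (n choose i) * (deriv ^^ i) u w * (deriv ^^ (n-i)) v w) has_real_derivative
     (\<Sum>i = 0..n. real (n choose i) * ((deriv ^^ Suc i) u y * (deriv ^^ (n-i)) v y + (deriv ^^ Suc (n-i)) v y * (deriv ^^ i) u y))) (at y)"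
    apply (rule DERIV_sum)
    apply (rule DERIV_cong[OF DERIV_mult[OF DERIV_cmult[OF smooth_deriv[OF u y]] smooth_deriv[OF v y]]])
    apply (simp add: algebra_simps del: funpow.simps)
    done
  then show "((\<lambda>w. \<Sum>i = 0..n. real (n choose i) * (deriv ^^ i) u w * (deriv ^^ (n-i)) v w) has_real_derivative
     (\<Sum>i = 0..Suc n. real (Suc n choose i) * (deriv ^^ i) u y * (deriv ^^ (Suc n-i)) v y)) (at y)"
    apply (rule DERIV_cong)
    apply (subst sumeq)
    apply (simp add: algebra_simps del: funpow.simps)
    done
qed

lemma smooth_const: "open U \<Longrightarrow> smooth_on U (\<lambda>t. c)"
  by (rule smooth_from_H[where H="\<lambda>k w. if k = 0 then c else 0"]) auto

lemma smooth_pow: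
  assumes U: "open U" and g: "smooth_on U g"
  shows "smooth_on U (\<lambda>t. g t ^ p)"
proof (induction p)
  case 0 then show ?case using smooth_const[OF U] by simp
next
  case (Suc p) then show ?case using smooth_mult[OF U g Suc] by simp
qed

lemma deriv_const_fun: "deriv (\<lambda>t. c) = (\<lambda>t. 0::real)"
  by (rule ext, rule DERIV_imp_deriv) simp

lemma iter_deriv_zero: "(deriv ^^ k) (\<lambda>t. 0::real) = (\<lambda>t. 0)"
  by (induction k) (simp_all add: deriv_const_fun)

lemma iter_deriv_const: "(deriv ^^ Suc k) (\<lambda>t. c::real) = (\<lambda>t. 0)"
  by (simp only: funpow_Suc_right o_apply deriv_const_fun iter_deriv_zero)

lemma deriv_minus_const: "deriv (\<lambda>t. h t - c) = deriv (h::real \<Rightarrow> real)"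
proof (rule ext)
  fix x
  have "((\<lambda>t. h t - c) has_real_derivative D) (at x) \<longleftrightarrow> (h has_real_derivative D) (at x)" for D
  proof
    assume "((\<lambda>t. h t - c) has_real_derivative D) (at x)"
    from DERIV_add[OF this DERIV_const[of c]] show "(h has_real_derivative D) (at x)" by simp
  next
    assume "(h has_real_derivative D) (at x)"
    from DERIV_diff[OF this DERIV_const[of c]] show "((\<lambda>t. h t - c) has_real_derivative D) (at x)" by simp
  qed
  then show "deriv (\<lambda>t. h t - c) x = deriv h x" unfolding deriv_def by simp
qed

lemma iter_deriv_minus_const: "(deriv ^^ Suc k) (\<lambda>t. h t - c) = (deriv ^^ Suc k) (h::real \<Rightarrow> real)"
  by (simp only: funpow_Suc_right o_apply deriv_minus_const)

definition Pf :: "(real \<Rightarrow> real) \<Rightarrow> nat \<Rightarrow> nat \<Rightarrow> real \<Rightarrow> real" where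
  "Pf g m k y = (\<Sum>j=0..m. (-1)^j * real (m choose j) * g y ^ j * (deriv ^^ k) (\<lambda>t. g t ^ (m-j)) y)"

lemma coeff_aux:
  fixes C S M c p A B :: real
  assumes "C * S = M * c"
  shows "(-1)^Suc i * C * (S * A * B) = - M * ((-1)^i * c * A * B)"
proof -
  have "(-1::real)^Suc i * C * (S * A * B) = - ((-1)^i * (C * S) * A * B)"
    by (simp add: mult_ac)
  also have "\<dots> = - M * ((-1)^i * c * A * B)" using assms by (simp add: mult_ac)
  finally show ?thesis .
qed

lemma sum_shift_identity:
  "(\<Sum>j=0..m. (-1::real)^j * real (m choose j) * (real j * a ^ (j - 1) * b j)) =
     - real m * (\<Sum>i=0..m-1. (-1)^i * real ((m-1) choose i) * a ^ i * b (Suc i))"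
proof (cases m)
  case 0 then show ?thesis by simp
next
  case (Suc m')
  have "(\<Sum>j=0..Suc m'. (-1::real)^j * real (Suc m' choose j) * (real j * a ^ (j - 1) * b j)) =
        (\<Sum>i=0..m'. (-1::real)^Suc i * real (Suc m' choose Suc i) * (real (Suc i) * a ^ i * b (Suc i)))"
    by (subst sum.atLeast0_atMost_Suc_shift) simp
  also have "\<dots> = (\<Sum>i=0..m'. - real (Suc m') * ((-1)^i * real (m' choose i) * a ^ i * b (Suc i)))"
  proof (rule sum.cong[OF refl])
    fix i
    have "real (Suc m' choose Suc i) * real (Suc i) = real (Suc m') * real (m' choose i)"
      using Suc_times_binomial[of i m'] by (metis mult.commute of_nat_mult)
    then show "(-1::real)^Suc i * real (Suc m' choose Suc i) * (real (Suc i) * a ^ i * b (Suc i)) =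
       - real (Suc m') * ((-1)^i * real (m' choose i) * a ^ i * b (Suc i))"
      by (rule coeff_aux)
  qed
  also have "\<dots> = - real m * (\<Sum>i=0..m-1. (-1)^i * real ((m-1) choose i) * a ^ i * b (Suc i))"
    by (simp add: Suc sum_distrib_left)
  finally show ?thesis using Suc by simp
qed

lemma P_deriv:
  assumes U: "open U" and g: "smooth_on U g" and y: "y \<in> U"
  shows "(Pf g m k has_real_derivative (Pf g m (Suc k) y - real m * deriv g y * Pf g (m-1) k y)) (at y)"
proof -
  have gd: "(g has_real_derivative deriv g y) (at y)" using smooth_deriv[OF g y, of 0] by simp
  let ?T = "\<lambda>j. (-1)^j * real (m choose j) * (real j * (deriv g y * g y ^ (j - 1)) * (deriv ^^ k) (\<lambda>t. g t ^ (m-j)) y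
             + g y ^ j * (deriv ^^ Suc k) (\<lambda>t. g t ^ (m-j)) y)"
  have "((\<lambda>w. \<Sum>j=0..m. (-1)^j * real (m choose j) * g w ^ j * (deriv ^^ k) (\<lambda>t. g t ^ (m-j)) w)
      has_real_derivative (\<Sum>j=0..m. ?T j)) (at y)"
    apply (rule DERIV_sum)
    apply (rule DERIV_cong[OF DERIV_mult[OF DERIV_cmult[OF DERIV_power[OF gd]] smooth_deriv[OF smooth_pow[OF U g] y]]])
    apply (simp add: algebra_simps del: funpow.simps)
    done
  moreover have "(\<Sum>j=0..m. ?T j) = Pf g m (Suc k) y - real m * deriv g y * Pf g (m-1) k y"
  proof -
    have "(\<Sum>j=0..m. ?T j) = (\<Sum>j=0..m. (-1)^j * real (m choose j) * g y ^ j * (deriv ^^ Suc k) (\<lambda>t. g t ^ (m-j)) y)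
        + (\<Sum>j=0..m. (-1::real)^j * real (m choose j) * (real j * g y ^ (j - 1) * (deriv g y * (deriv ^^ k) (\<lambda>t. g t ^ (m-j)) y)))"
      by (simp add: sum.distrib[symmetric] algebra_simps del: funpow.simps)
    also have "(\<Sum>j=0..m. (-1::real)^j * real (m choose j) * (real j * g y ^ (j - 1) * (deriv g y * (deriv ^^ k) (\<lambda>t. g t ^ (m-j)) y)))
       = - real m * (\<Sum>i=0..m-1. (-1)^i * real ((m-1) choose i) * g y ^ i * (deriv g y * (deriv ^^ k) (\<lambda>t. g t ^ (m - Suc i)) y))"
      by (rule sum_shift_identity[where b = "\<lambda>j. deriv g y * (deriv ^^ k) (\<lambda>t. g t ^ (m-j)) y"])
    also have "\<dots> = - real m * deriv g y * Pf g (m-1) k y"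
      unfolding Pf_def by (simp add: sum_distrib_left algebra_simps del: funpow.simps)
    finally show ?thesis unfolding Pf_def by simp
  qed
  ultimately show ?thesis unfolding Pf_def[abs_def] by simp
qed

lemma P_zero_low:
  assumes U: "open U" and g: "smooth_on U g"
  shows "k < m \<Longrightarrow> y \<in> U \<Longrightarrow> Pf g m k y = 0"
proof (induction k arbitrary: m y)
  case 0
  have "Pf g m 0 y = (\<Sum>j\<le>m. real (m choose j) * (- g y) ^ j * g y ^ (m-j))"
    unfolding Pf_def by (simp add: atLeast0AtMost power_mult_distrib[symmetric] algebra_simps)
  also have "\<dots> = (- g y + g y) ^ m" by (simp only: binomial_ring)
  finally show ?case using 0 by simp
next
  case (Suc k m y)
  have d: "(Pf g m k has_real_derivative (Pf g m (Suc k) y - real m * deriv g y * Pf g (m-1) k y)) (at y)"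
    by (rule P_deriv[OF U g Suc.prems(2)])
  have "((\<lambda>t. 0) has_real_derivative (Pf g m (Suc k) y - real m * deriv g y * Pf g (m-1) k y)) (at y)"
    by (rule has_field_derivative_transform_within_open[OF d U Suc.prems(2)]) (use Suc.IH Suc.prems in auto)
  then have "Pf g m (Suc k) y - real m * deriv g y * Pf g (m-1) k y = 0"
    using DERIV_unique DERIV_const by blast
  moreover have "Pf g (m-1) k y = 0" using Suc.IH Suc.prems by auto
  ultimately show ?case by simp
qed

lemma P_diag:
  assumes U: "open U" and g: "smooth_on U g" and y: "y \<in> U"
  shows "Pf g (Suc k) (Suc k) y = real (Suc k) * deriv g y * Pf g k k y"
proof -
  have d: "(Pf g (Suc k) k has_real_derivative (Pf g (Suc k) (Suc k) y - real (Suc k) * deriv g y * Pf g k k y)) (at y)"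
    using P_deriv[OF U g y, of "Suc k" k] by simp
  have "((\<lambda>t. 0) has_real_derivative (Pf g (Suc k) (Suc k) y - real (Suc k) * deriv g y * Pf g k k y)) (at y)"
    by (rule has_field_derivative_transform_within_open[OF d U y]) (use P_zero_low[OF U g] in auto)
  then have "Pf g (Suc k) (Suc k) y - real (Suc k) * deriv g y * Pf g k k y = 0"
    using DERIV_unique DERIV_const by blast
  then show ?thesis by simp
qed

lemma P_zero_m: "Pf g 0 (Suc k) y = 0"
  unfolding Pf_def by (simp add: iter_deriv_const del: funpow.simps)

lemma faa_di_bruno:
  assumes U: "open U" and g: "smooth_on U g" and gUV: "g ` U \<subseteq> V" and f: "smooth_on V f"
    and y: "y \<in> U"
  shows "(deriv ^^ k) (\<lambda>t. f (g t)) y = (\<Sum>m=0..k. (deriv ^^ m) f (g y) / fact m * Pf g m k y)"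
proof (rule iter_deriv_eq[OF U _ _ y])
  fix y assume "y \<in> U" show "f (g y) = (\<Sum>m=0..0. (deriv ^^ m) f (g y) / fact m * Pf g m 0 y)"
    by (simp add: Pf_def)
next
  fix k y assume y: "y \<in> U"
  have gd: "(g has_real_derivative deriv g y) (at y)" using smooth_deriv[OF g y, of 0] by simp
  have gy: "g y \<in> V" using gUV y by auto
  define A where "A m = (deriv ^^ Suc m) f (g y) * deriv g y / fact m * Pf g m k y" for m
  define B where "B m = (deriv ^^ m) f (g y) / fact m * Pf g m (Suc k) y" for m
  define C where "C m = (deriv ^^ m) f (g y) / fact m * (real m * deriv g y * Pf g (m-1) k y)" for m
  have "((\<lambda>w. \<Sum>m=0..k. (deriv ^^ m) f (g w) / fact m * Pf g m k w) has_real_derivative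
      (\<Sum>m=0..k. A m + (B m - C m))) (at y)"
    apply (rule DERIV_sum)
    apply (rule DERIV_cong[OF DERIV_mult[OF DERIV_cdivide[OF DERIV_chain2[OF smooth_deriv[OF f gy] gd]] P_deriv[OF U g y]]])
    apply (simp add: A_def B_def C_def algebra_simps del: funpow.simps)
    done
  moreover have "(\<Sum>m=0..k. A m + (B m - C m)) = (\<Sum>m=0..Suc k. B m)"
  proof -
    have C0: "C 0 = 0" by (simp add: C_def)
    have CS: "C (Suc i) = A i" for i
    proof -
      have e: "(fact (Suc i)::real) = real (Suc i) * fact i" by (simp del: of_nat_Suc)
      have nz: "real (Suc i) \<noteq> 0" "(fact i::real) \<noteq> 0" by auto
      show ?thesis unfolding A_def C_def using nz
        by (simp only: e diff_Suc_1) (simp add: divide_simps del: funpow.simps of_nat_Suc)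
    qed
    have sC: "(\<Sum>m=0..k. C m) = (\<Sum>m<k. A m)"
    proof (cases k)
      case 0 then show ?thesis using C0 by simp
    next
      case (Suc k')
      have "(\<Sum>m=0..k. C m) = (\<Sum>m\<le>Suc k'. C m)" by (simp add: Suc atLeast0AtMost)
      also have "\<dots> = C 0 + (\<Sum>i\<le>k'. C (Suc i))" by (simp only: sum.atMost_Suc_shift)
      also have "\<dots> = (\<Sum>i<k. A i)" by (simp add: C0 CS Suc lessThan_Suc_atMost)
      finally show ?thesis .
    qed
    have sA: "(\<Sum>m=0..k. A m) = (\<Sum>m<k. A m) + A k"
      by (simp add: atLeast0AtMost lessThan_Suc_atMost[symmetric])
    have BS: "B (Suc k) = A k"
    proof -
      have e: "(fact (Suc k)::real) = real (Suc k) * fact k" by (simp del: of_nat_Suc)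
      have nz: "real (Suc k) \<noteq> 0" "(fact k::real) \<noteq> 0" by auto
      show ?thesis unfolding A_def B_def P_diag[OF U g y] using nz
        by (simp only: e) (simp add: divide_simps del: funpow.simps of_nat_Suc)
    qed
    have "(\<Sum>m=0..k. A m + (B m - C m)) = (\<Sum>m=0..k. A m) + (\<Sum>m=0..k. B m) - (\<Sum>m=0..k. C m)"
      by (simp add: sum.distrib sum_subtractf)
    also have "\<dots> = (\<Sum>m=0..k. B m) + B (Suc k)" using sA sC BS by simp
    also have "\<dots> = (\<Sum>m=0..Suc k. B m)" by simp
    finally show ?thesis .
  qed
  ultimately show "((\<lambda>w. \<Sum>m=0..k. (deriv ^^ m) f (g w) / fact m * Pf g m k w) has_real_derivative
      (\<Sum>m=0..Suc k. (deriv ^^ m) f (g y) / fact m * Pf g m (Suc k) y)) (at y)"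
    by (simp add: B_def del: funpow.simps)
qed

lemma frac_coeff_int_zero:
  assumes "k \<noteq> a" shows "frac_coeff (real a) k = 0"
proof -
  have "pi * (real a - real k) = pi * of_int (int a - int k)" by simp
  then have "sin (pi * (real a - real k)) = 0" by (simp only: sin_npi_int)
  then show ?thesis using assms by (simp add: frac_coeff_def sinc_ratio_def)
qed

lemma frac_coeff_generic:
  assumes "0 < \<alpha>" "\<alpha> < 1"
  shows "frac_coeff \<alpha> k = (-1)^k * sin (pi * \<alpha>) * Gamma (\<alpha> + 1) / (pi * (\<alpha> - real k) * fact k)"
proof -
  have ne: "\<alpha> \<noteq> real k"
  proof
    assume "\<alpha> = real k"
    with assms have "0 < real k" "real k < 1" by auto
    then have "0 < k" "k < 1" by simp_all
    then show False by simp
  qed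
  have "sin (pi * (\<alpha> - real k)) = (-1)^k * sin (pi * \<alpha>)"
    by (simp add: right_diff_distrib sin_diff)
  moreover have "Gamma (real k + 1) = fact k" using Gamma_fact[of k] by (simp add: add.commute)
  ultimately show ?thesis using ne by (simp add: frac_coeff_def sinc_ratio_def)
qed

lemma alg_aux:
  fixes s G a b fm fn P Q :: real
  assumes "a \<noteq> 0" "b \<noteq> 0" "fm \<noteq> 0" "fn \<noteq> 0" "P \<noteq> 0" "Q \<noteq> 0"
  shows "(-1)^m * s * G / (pi * (-a) * fm) * (fn * (a * Q / b) / (P * Q * fn) * (-1)^n) =
         (-1)^(m+n) * s * G / (pi * (-b) * (fm * P))"
  using assms pi_neq_zero by (simp add: field_simps power_add)

lemma coeff_identity:
  assumes "0 \<le> \<alpha>" "\<alpha> \<le> 1" "m \<noteq> 0 \<or> n = 0"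
  shows "frac_coeff \<alpha> m * F22_coeff \<alpha> m n = frac_coeff \<alpha> (m + n)"
proof (cases "n = 0")
  case True then show ?thesis by (simp add: F22_coeff_def)
next
  case n: False
  with assms have m: "m \<noteq> 0" by auto
  consider "\<alpha> = 0" | "\<alpha> = 1" | "0 < \<alpha> \<and> \<alpha> < 1" using assms by linarith
  then show ?thesis
  proof cases
    case 1
    then show ?thesis using frac_coeff_int_zero[of m 0] frac_coeff_int_zero[of "m+n" 0] m by simp
  next
    case 2
    show ?thesis
    proof (cases "m = 1")
      case True
      have "F22_coeff \<alpha> m n = 0" using True 2 n by (simp add: F22_coeff_def pochhammer_0_left)
      moreover have "frac_coeff \<alpha> (m + n) = 0" using frac_coeff_int_zero[of "m+n" 1] True 2 n by simp
      ultimately show ?thesis by simp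
    next
      case False
      then show ?thesis using frac_coeff_int_zero[of m 1] frac_coeff_int_zero[of "m+n" 1] m 2 by simp
    qed
  next
    case 3
    define a where "a = real m - \<alpha>"
    have a0: "a \<noteq> 0" and an0: "a + real n \<noteq> 0" using 3 m unfolding a_def by linarith+
    have rec: "pochhammer a n * (a + real n) = a * pochhammer (a + 1) n"
      using pochhammer_rec[of a n] pochhammer_rec'[of a n] by (simp add: mult.commute)
    have "pochhammer (a + 1) n > 0"
      by (rule pochhammer_pos) (use 3 in \<open>simp add: a_def\<close>)
    then have Pa1: "pochhammer (a + 1) n \<noteq> 0" by simp
    have "pochhammer (1 + real m) n > (0::real)"
      by (rule pochhammer_pos) simp
    then have P1: "pochhammer (1 + real m) n \<noteq> (0::real)" by simp
    have factmn: "(fact (m + n)::real) = fact m * pochhammer (1 + real m) n"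
      using pochhammer_product'[of "1::real" m n] by (simp add: pochhammer_fact[symmetric] add.commute)
    have Pa: "pochhammer a n = a * pochhammer (a + 1) n / (a + real n)"
      using rec an0 by (simp add: eq_divide_eq)
    have e1: "1 + real m - \<alpha> = a + 1" by (simp add: a_def)
    have fm: "(fact m :: real) \<noteq> 0" by simp
    have fn: "(fact n :: real) \<noteq> 0" by simp
    have am: "\<alpha> - real m = - a" and amn: "\<alpha> - real (m + n) = - (a + real n)" by (simp_all add: a_def)
    show ?thesis
      unfolding frac_coeff_generic[OF 3[THEN conjunct1] 3[THEN conjunct2]] F22_coeff_def
      unfolding e1 a_def[symmetric] Pa factmn am amn pochhammer_fact[symmetric]
      by (rule alg_aux[OF a0 an0 fm fn P1 Pa1])
  qed
qed

lemma suminf_infsum_real: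
  fixes f :: "nat \<Rightarrow> real"
  assumes "summable (\<lambda>n. \<bar>f n\<bar>)"
  shows "suminf f = infsum f UNIV"
proof -
  have "f summable_on UNIV" by (rule norm_summable_imp_summable_on) (use assms in simp)
  then have "f sums infsum f UNIV" by (intro has_sum_imp_sums has_sum_infsum)
  then show ?thesis by (rule sums_unique[symmetric])
qed

lemma section_summable:
  fixes f :: "'a \<Rightarrow> 'b \<Rightarrow> 'c::banach"
  assumes "(\<lambda>(x,y). f x y) summable_on Sigma A B" "a \<in> A"
  shows "f a summable_on B a"
proof -
  have "Pair a ` B a \<subseteq> Sigma A B" using assms(2) by auto
  then have "(\<lambda>(x,y). f x y) summable_on (Pair a ` B a)" by (rule summable_on_subset_banach[OF assms(1)])
  then have "((\<lambda>(x,y). f x y) \<circ> Pair a) summable_on B a"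
    by (subst (asm) summable_on_reindex) (auto intro: inj_onI)
  then show ?thesis by (simp add: o_def)
qed

lemma inner_sum:
  assumes a0: "0 \<le> \<alpha>" and a1: "\<alpha> \<le> 1" and x: "x > 0" and mk: "m \<le> k"
  shows "(\<Sum>j=0..m. triple_term \<alpha> f g x m j (k - m)) =
         frac_coeff \<alpha> k * x powr (real k - \<alpha>) * ((deriv ^^ m) f (g x) / fact m * Pf g m k x)"
proof -
  define n where "n = k - m"
  have kn: "k = n + m" using mk by (simp add: n_def)
  have d: "(deriv ^^ n) ((deriv ^^ m) u) = (deriv ^^ k) u" for u :: "real \<Rightarrow> real"
    by (simp add: kn funpow_add)
  have "(\<Sum>j=0..m. triple_term \<alpha> f g x m j n) =
     (F22_coeff \<alpha> m n * x ^ n * frac_coeff \<alpha> m * x powr (real m - \<alpha>) * (deriv ^^ m) f (g x) / fact m) * Pf g m k x"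
    unfolding triple_term_def F22_term_def d Pf_def sum_distrib_left
    by (rule sum.cong[OF refl]) (simp add: field_simps)
  also have "\<dots> = frac_coeff \<alpha> k * x powr (real k - \<alpha>) * ((deriv ^^ m) f (g x) / fact m * Pf g m k x)"
  proof (cases "m \<noteq> 0 \<or> n = 0")
    case True
    have c: "frac_coeff \<alpha> m * F22_coeff \<alpha> m n = frac_coeff \<alpha> k"
      using coeff_identity[OF a0 a1 True] kn by (simp add: add.commute)
    have p: "x ^ n * x powr (real m - \<alpha>) = x powr (real k - \<alpha>)"
      using x by (simp add: kn powr_realpow[symmetric] powr_add[symmetric] add_diff_eq)
    have "F22_coeff \<alpha> m n * x ^ n * frac_coeff \<alpha> m * x powr (real m - \<alpha>) =
          (frac_coeff \<alpha> m * F22_coeff \<alpha> m n) * (x ^ n * x powr (real m - \<alpha>))" by (simp add: mult_ac)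
    then show ?thesis unfolding c p by (simp add: field_simps)
  next
    case False
    then have "m = 0" "k = Suc (n - 1)" using kn by auto
    then have "Pf g m k x = 0" using P_zero_m by simp
    then show ?thesis by simp
  qed
  finally show ?thesis by (simp add: n_def)
qed

theorem mainTheorem2:
  fixes \<alpha> x :: real and f g :: "real \<Rightarrow> real" and U V :: "real set"
  assumes "0 \<le> \<alpha>" "\<alpha> \<le> 1"
    and "open U" "{0..} \<subseteq> U" "smooth_on U g"
    and "open V" "g ` U \<subseteq> V" "smooth_on V f"
    and "f (g 0) = 0"
    and "x > 0"
    and "summable (\<lambda>k. \<bar>frac_D_term \<alpha> (\<lambda>t. f (g t)) x k\<bar>)"
    and "\<And>m j. j \<le> m \<Longrightarrow>
           summable (\<lambda>n. \<bar>F22_term \<alpha> m ((deriv ^^ m) (\<lambda>t. g t ^ (m - j))) x n\<bar>)"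
    and "summable (\<lambda>m. \<bar>RHS_term \<alpha> f g x m\<bar>)"
    and "(\<lambda>(m, j, n). \<bar>triple_term \<alpha> f g x m j n\<bar>) summable_on {(m, j, n). j \<le> m}"
  shows "frac_D \<alpha> (\<lambda>t. f (g t)) x = (\<Sum>m. RHS_term \<alpha> f g x m)"
proof -
  define T where "T = (\<lambda>(m::nat, j::nat, n::nat). triple_term \<alpha> f g x m j n)"
  define S where "S = {(m::nat, j::nat, n::nat). j \<le> m}"
  have xU: "x \<in> U" using assms(4,10) by auto
  have Tsum: "T summable_on S"
  proof -
    have "(\<lambda>p. norm (T p)) = (\<lambda>(m, j, n). \<bar>triple_term \<alpha> f g x m j n\<bar>)" by (auto simp: T_def fun_eq_iff)
    then have "(\<lambda>p. norm (T p)) summable_on S" using assms(14) by (simp add: S_def)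
    then show ?thesis by (rule abs_summable_summable)
  qed
  have S_Sigma: "S = Sigma UNIV (\<lambda>m. {(j,n). j \<le> m})" by (auto simp: S_def)
  have TS': "(\<lambda>(m, p). (\<lambda>m (j,n). triple_term \<alpha> f g x m j n) m p) summable_on Sigma UNIV (\<lambda>m. {(j,n). j \<le> m})"
    using Tsum unfolding S_Sigma T_def by simp
  have R1: "infsum T S = infsum (\<lambda>m. infsum (\<lambda>(j,n). triple_term \<alpha> f g x m j n) {(j,n). j \<le> m}) UNIV"
    using infsum_Sigma'_banach[OF TS'] unfolding S_Sigma T_def by simp
  have R2: "infsum (\<lambda>(j,n). triple_term \<alpha> f g x m j n) {(j,n). j \<le> m} = RHS_term \<alpha> f g x m" for m
  proof -
    have sec: "(\<lambda>(j,n). triple_term \<alpha> f g x m j n) summable_on {(j,n). j \<le> m}"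
      using section_summable[OF TS', of m] by simp
    have e: "{(j::nat,n::nat). j \<le> m} = Sigma {0..m} (\<lambda>_. UNIV)" by auto
    have sec': "(\<lambda>(j, n). (\<lambda>j n. triple_term \<alpha> f g x m j n) j n) summable_on Sigma {0..m} (\<lambda>_. UNIV)"
      using sec unfolding e by simp
    define K1 where "K1 j = (-1) ^ j / fact m * real (m choose j) * g x ^ j" for j
    define K2 where "K2 = frac_coeff \<alpha> m * x powr (real m - \<alpha>) * (deriv ^^ m) f (g x)"
    have inner: "infsum (\<lambda>n. triple_term \<alpha> f g x m j n) UNIV =
        K1 j * (F22_op \<alpha> m ((deriv ^^ m) (\<lambda>t. g t ^ (m - j))) x * K2)" if j: "j \<in> {0..m}" for j
    proof -
      have "(\<lambda>n. triple_term \<alpha> f g x m j n) =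
          (\<lambda>n. K1 j * (F22_term \<alpha> m ((deriv ^^ m) (\<lambda>t. g t ^ (m - j))) x n * K2))"
        by (simp only: triple_term_def K1_def K2_def mult.assoc)
      then have "infsum (\<lambda>n. triple_term \<alpha> f g x m j n) UNIV =
          K1 j * (infsum (F22_term \<alpha> m ((deriv ^^ m) (\<lambda>t. g t ^ (m - j))) x) UNIV * K2)"
        by (simp add: infsum_cmult_right' infsum_cmult_left')
      also have "infsum (F22_term \<alpha> m ((deriv ^^ m) (\<lambda>t. g t ^ (m - j))) x) UNIV =
          F22_op \<alpha> m ((deriv ^^ m) (\<lambda>t. g t ^ (m - j))) x"
        unfolding F22_op_def using suminf_infsum_real[OF assms(12)] j by simp
      finally show ?thesis .
    qed
    have "infsum (\<lambda>(j,n). triple_term \<alpha> f g x m j n) {(j,n). j \<le> m}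
        = infsum (\<lambda>j. infsum (\<lambda>n. triple_term \<alpha> f g x m j n) UNIV) {0..m}"
      using infsum_Sigma'_banach[OF sec'] unfolding e by simp
    also have "\<dots> = (\<Sum>j=0..m. K1 j * (F22_op \<alpha> m ((deriv ^^ m) (\<lambda>t. g t ^ (m - j))) x * K2))"
      by (simp add: inner del: funpow.simps)
    also have "\<dots> = RHS_term \<alpha> f g x m"
      unfolding RHS_term_def W_weight_def K1_def K2_def sum_distrib_right
      by (rule sum.cong[OF refl]) (simp add: mult_ac)
    finally show ?thesis .
  qed
  have RHS: "infsum T S = (\<Sum>m. RHS_term \<alpha> f g x m)"
    unfolding R1 R2 using suminf_infsum_real[OF assms(13)] by simp
  define \<phi> where "\<phi> = (\<lambda>(k::nat, m::nat, j::nat). (m, j, k - m))"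
  define S2 where "S2 = {(k::nat, m::nat, j::nat). m \<le> k \<and> j \<le> m}"
  have bij: "bij_betw \<phi> S2 S"
    by (rule bij_betwI[where g = "\<lambda>(m,j,n). (m+n, m, j)"]) (auto simp: \<phi>_def S2_def S_def)
  have L1: "infsum (\<lambda>p. T (\<phi> p)) S2 = infsum T S" by (rule infsum_reindex_bij_betw[OF bij])
  have T2sum: "(\<lambda>p. T (\<phi> p)) summable_on S2" using summable_on_reindex_bij_betw[OF bij, of T] Tsum by simp
  define T2 where "T2 k mj = (case mj of (m, j) \<Rightarrow> triple_term \<alpha> f g x m j (k - m))" for k mj
  have S2_Sigma: "S2 = Sigma UNIV (\<lambda>k. {(m,j). m \<le> k \<and> j \<le> m})" by (auto simp: S2_def)
  have T2eq: "(\<lambda>(k, mj). T2 k mj) = (\<lambda>p. T (\<phi> p))"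
    by (auto simp: fun_eq_iff T_def \<phi>_def T2_def)
  have T2sum': "(\<lambda>(k, mj). T2 k mj) summable_on Sigma UNIV (\<lambda>k. {(m,j). m \<le> k \<and> j \<le> m})"
    using T2sum unfolding T2eq S2_Sigma .
  have L2: "infsum (\<lambda>p. T (\<phi> p)) S2 = infsum (\<lambda>k. infsum (T2 k) {(m,j). m \<le> k \<and> j \<le> m}) UNIV"
    using infsum_Sigma'_banach[OF T2sum'] unfolding T2eq S2_Sigma by simp
  have L3: "infsum (T2 k) {(m,j). m \<le> k \<and> j \<le> m} = frac_D_term \<alpha> (\<lambda>t. f (g t)) x k" for k
  proof -
    have e: "{(m::nat,j::nat). m \<le> k \<and> j \<le> m} = Sigma {0..k} (\<lambda>m. {0..m})" by auto
    have "infsum (T2 k) {(m,j). m \<le> k \<and> j \<le> m} = (\<Sum>m=0..k. \<Sum>j=0..m. T2 k (m, j))"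
      unfolding e by (simp add: sum.Sigma)
    also have "\<dots> = (\<Sum>m=0..k. frac_coeff \<alpha> k * x powr (real k - \<alpha>) * ((deriv ^^ m) f (g x) / fact m * Pf g m k x))"
      unfolding T2_def using inner_sum[OF assms(1,2,10)] by (simp del: funpow.simps)
    also have "\<dots> = frac_coeff \<alpha> k * x powr (real k - \<alpha>) * (deriv ^^ k) (\<lambda>t. f (g t)) x"
      unfolding faa_di_bruno[OF assms(3,5,7,8) xU] sum_distrib_left ..
    also have "\<dots> = frac_D_term \<alpha> (\<lambda>t. f (g t)) x k"
      unfolding frac_D_term_def using assms(9) by simp
    finally show ?thesis .
  qed
  have LHS: "infsum T S = frac_D \<alpha> (\<lambda>t. f (g t)) x"
    unfolding L1[symmetric] L2 L3 frac_D_def using suminf_infsum_real[OF assms(11)] by simp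
  show ?thesis using LHS RHS by simp
qed

end
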